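(* Let $d \ge 1$ be any dimension, let $S_n = \{s_1, \ldots, s_n\} \subseteq \mathbb{R}^d$ be any set of $n$ distinct locations, and fix $\nu > 0$. For $\rho > 0$ let $\Gamma_n(\rho)$ be the $n \times n$ matrix with entries $K(s_i - s_j; \rho, \nu)$, where $K$ is the Matérn correlation function defined in the context, and for $Z_n \in \mathbb{R}^n$ define $$\hat{c}_n(\rho) = \frac{Z_n^{\mathrm{T}} \Gamma_n(\rho)^{-1} Z_n}{n \rho^{2\nu}}.$$ Then for any $0 < \rho_1 < \rho_2$ and any vector $Z_n \in \mathbb{R}^n$, we have $\hat{c}_n(\rho_2) \le \hat{c}_n(\rho_1)$.
   Context: The Matérn correlation function with range parameter $\rho > 0$ and smoothness parameter $\nu > 0$ is defined for $h \in \mathbb{R}^d$ by $$K(h; \rho, \nu) = \frac{(\|h\|/\rho)^\nu}{\Gamma(\nu) 2^{\nu - 1}} \mathcal{K}_\nu(\|h\|/\rho),$$ where $\mathcal{K}_\nu$ is the modified Bessel function of the second kind of order $\nu$. By continuity, $K(0; \rho, \nu) = 1$. *)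

theory Defs
  imports "HOL-Analysis.Analysis"
begin

definition besselK :: "real \<Rightarrow> real \<Rightarrow> real" where
  "besselK nu x = integral {0..} (\<lambda>t. exp (- x * cosh t) * cosh (nu * t))"

text \<open>Matern correlation function K(h; rho, nu), with K(0) = 1 by continuity.\<close>
definition matern :: "'a::real_normed_vector \<Rightarrow> real \<Rightarrow> real \<Rightarrow> real" where
  "matern h rho nu =
     (if h = 0 then 1
      else (norm h / rho) powr nu / (Gamma nu * 2 powr (nu - 1)) * besselK nu (norm h / rho))"

definition matern_corr_matrix :: "('n::finite \<Rightarrow> 'a::real_normed_vector) \<Rightarrow> real \<Rightarrow> real \<Rightarrow> real^'n^'n" where
  "matern_corr_matrix s rho nu = (\<chi> i j. matern (s i - s j) rho nu)"

definition c_hat :: "('n::finite \<Rightarrow> 'a::real_normed_vector) \<Rightarrow> real \<Rightarrow> real^'n \<Rightarrow> real \<Rightarrow> real" where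
  "c_hat s nu Z rho =
     (Z \<bullet> (matrix_inv (matern_corr_matrix s rho nu) *v Z)) / (real CARD('n) * rho powr (2 * nu))"

end

theory Submission
  imports Defs "HOL-Computational_Algebra.Polynomial" "HOL-Library.FuncSet"
begin

lemma vandermonde_zero:
  fixes b l :: "'n::finite \<Rightarrow> real"
  assumes inj: "inj l" and z: "\<And>k::nat. (\<Sum>i\<in>UNIV. b i * l i ^ k) = 0"
  shows "b i0 = 0"
proof -
  define q where "q = (\<Prod>j\<in>UNIV-{i0}. [:- l j, 1:])"
  have pq: "poly q x = (\<Prod>j\<in>UNIV-{i0}. x - l j)" for x
    by (simp add: q_def poly_prod)
  have "(\<Sum>i\<in>UNIV. b i * poly q (l i)) = (\<Sum>i\<in>UNIV. \<Sum>k\<le>degree q. coeff q k * (b i * l i ^ k))"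
    by (simp add: poly_altdef sum_distrib_left mult_ac)
  also have "\<dots> = (\<Sum>k\<le>degree q. coeff q k * (\<Sum>i\<in>UNIV. b i * l i ^ k))"
    by (subst sum.swap) (simp add: sum_distrib_left)
  also have "\<dots> = 0" using z by simp
  finally have s0: "(\<Sum>i\<in>UNIV. b i * poly q (l i)) = 0" .
  have z2: "(\<Sum>i\<in>UNIV-{i0}. b i * poly q (l i)) = 0"
  proof (rule sum.neutral, rule ballI)
    fix i assume "i \<in> UNIV - {i0}"
    then have "(\<Prod>j\<in>UNIV - {i0}. l i - l j) = 0"
      by (intro prod_zero) auto
    then show "b i * poly q (l i) = 0" unfolding pq by simp
  qed
  have "(\<Sum>i\<in>UNIV. b i * poly q (l i)) = b i0 * poly q (l i0)"
    using sum.remove[of UNIV i0 "\<lambda>i. b i * poly q (l i)"] z2 by simp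
  moreover have "poly q (l i0) \<noteq> 0" unfolding pq
    using inj by (auto simp: inj_eq)
  ultimately show ?thesis using s0 by simp
qed

lemma power_inner_expand:
  fixes x y :: "real^'d"
  shows "(x \<bullet> y) ^ k = (\<Sum>g\<in>PiE {..<k} (\<lambda>_. UNIV). \<Prod>m<k. x$(g m) * y$(g m))"
proof -
  have "(x \<bullet> y) ^ k = (\<Prod>m<k. \<Sum>d\<in>UNIV. x$d * y$d)"
    by (simp add: inner_vec_def)
  also have "\<dots> = (\<Sum>g\<in>PiE {..<k} (\<lambda>_. UNIV). \<Prod>m<k. x$(g m) * y$(g m))"
    by (rule prod_sum_PiE) auto
  finally show ?thesis .
qed

lemma Tk_eq:
  fixes x :: "'n::finite \<Rightarrow> real^'d" and b :: "'n \<Rightarrow> real"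
  shows "(\<Sum>i\<in>UNIV. \<Sum>j\<in>UNIV. b i * b j * (x i \<bullet> x j) ^ k) =
    (\<Sum>g\<in>PiE {..<k} (\<lambda>_. UNIV). (\<Sum>i\<in>UNIV. b i * (\<Prod>m<k. x i $ (g m)))\<^sup>2)"
proof -
  have "(\<Sum>i\<in>UNIV. \<Sum>j\<in>UNIV. b i * b j * (x i \<bullet> x j) ^ k) =
     (\<Sum>i\<in>UNIV. \<Sum>j\<in>UNIV. \<Sum>g\<in>PiE {..<k} (\<lambda>_. UNIV).
        (b i * (\<Prod>m<k. x i $ (g m))) * (b j * (\<Prod>m<k. x j $ (g m))))"
    by (simp add: power_inner_expand sum_distrib_left prod.distrib mult_ac)
  also have "\<dots> = (\<Sum>g\<in>PiE {..<k} (\<lambda>_. UNIV). \<Sum>i\<in>UNIV. \<Sum>j\<in>UNIV.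
        (b i * (\<Prod>m<k. x i $ (g m))) * (b j * (\<Prod>m<k. x j $ (g m))))"
    by (simp add: sum.swap[where B="PiE _ _"])
  also have "\<dots> = (\<Sum>g\<in>PiE {..<k} (\<lambda>_. UNIV). (\<Sum>i\<in>UNIV. b i * (\<Prod>m<k. x i $ (g m)))\<^sup>2)"
    by (simp add: power2_eq_square sum_product)
  finally show ?thesis .
qed

lemma sep_vector:
  fixes x :: "'n::finite \<Rightarrow> real^'d"
  assumes inj: "inj x"
  shows "\<exists>y. inj (\<lambda>i. x i \<bullet> y)"
proof (rule ccontr)
  assume nex: "\<not> ?thesis"
  define H where "H = (\<lambda>(i,j). {y. (x i - x j) \<bullet> y = 0}) ` {(i,j). i \<noteq> j}"
  have "negligible (\<Union>H)"
  proof (rule negligible_Union)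
    show "finite H" unfolding H_def by simp
    fix T assume "T \<in> H"
    then obtain i j where "i \<noteq> j" "T = {y. (x i - x j) \<bullet> y = 0}" unfolding H_def by auto
    moreover have "x i - x j \<noteq> 0" using inj \<open>i \<noteq> j\<close> by (auto simp: inj_eq)
    ultimately show "negligible T" using negligible_hyperplane by blast
  qed
  moreover have "UNIV \<subseteq> \<Union>H"
  proof
    fix y :: "real^'d"
    from nex have "\<not> inj (\<lambda>i. x i \<bullet> y)" by blast
    then obtain i j where "i \<noteq> j" "x i \<bullet> y = x j \<bullet> y" unfolding inj_def by blast
    then show "y \<in> \<Union>H" unfolding H_def by (auto simp: inner_diff_left)
  qed
  ultimately show False using negligible_subset non_negligible_UNIV by blast
qed

lemma gauss_pd:
  fixes x :: "'n::finite \<Rightarrow> real^'d" and a :: "'n \<Rightarrow> real" and c :: real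
  assumes c: "c > 0" and inj: "inj x" and a: "a i1 \<noteq> 0"
  shows "0 < (\<Sum>i\<in>UNIV. \<Sum>j\<in>UNIV. a i * a j * exp (- c * (norm (x i - x j))\<^sup>2))"
proof -
  define b where "b i = a i * exp (- c * (norm (x i))\<^sup>2)" for i
  define T where "T k = (\<Sum>i\<in>UNIV. \<Sum>j\<in>UNIV. b i * b j * (x i \<bullet> x j) ^ k)" for k
  have eq1: "a i * a j * exp (- c * (norm (x i - x j))\<^sup>2) = b i * b j * exp (2 * c * (x i \<bullet> x j))" for i j
  proof -
    have "(norm (x i - x j))\<^sup>2 = (norm (x i))\<^sup>2 + (norm (x j))\<^sup>2 - 2 * (x i \<bullet> x j)"
      by (simp add: power2_norm_eq_inner inner_diff inner_commute)
    then have "- c * (norm (x i - x j))\<^sup>2 = (- c * (norm (x i))\<^sup>2) + (- c * (norm (x j))\<^sup>2) + 2 * c * (x i \<bullet> x j)"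
      by (simp only:) (simp add: algebra_simps)
    then have "exp (- c * (norm (x i - x j))\<^sup>2) = exp (- c * (norm (x i))\<^sup>2) * exp (- c * (norm (x j))\<^sup>2) * exp (2 * c * (x i \<bullet> x j))"
      by (simp only: exp_add)
    then show ?thesis by (simp add: b_def mult_ac)
  qed
  have sm: "(\<lambda>k. (2*c)^k / fact k * T k) sums (\<Sum>i\<in>UNIV. \<Sum>j\<in>UNIV. a i * a j * exp (- c * (norm (x i - x j))\<^sup>2))"
  proof -
    have "(\<lambda>k. \<Sum>i\<in>UNIV. \<Sum>j\<in>UNIV. b i * b j * ((2 * c * (x i \<bullet> x j))^k /\<^sub>R fact k))
       sums (\<Sum>i\<in>UNIV. \<Sum>j\<in>UNIV. b i * b j * exp (2 * c * (x i \<bullet> x j)))"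
      by (intro sums_sum sums_mult exp_converges)
    moreover have "(\<Sum>i\<in>UNIV. \<Sum>j\<in>UNIV. b i * b j * ((2 * c * (x i \<bullet> x j))^k /\<^sub>R fact k)) = (2*c)^k / fact k * T k" for k
      by (simp add: T_def sum_distrib_left power_mult_distrib divide_inverse mult_ac)
    ultimately show ?thesis unfolding eq1 by simp
  qed
  have Tnn: "T k \<ge> 0" for k unfolding T_def Tk_eq by (intro sum_nonneg) auto
  have "\<exists>k. T k > 0"
  proof (rule ccontr)
    assume "\<not> (\<exists>k. T k > 0)"
    then have T0: "T k = 0" for k using Tnn[of k] by (meson linorder_neqE_linordered_idom not_le)
    have V0: "(\<Sum>i\<in>UNIV. b i * (\<Prod>m<k. x i $ (g m))) = 0" if "g \<in> PiE {..<k} (\<lambda>_. UNIV)" for k :: nat and g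
    proof -
      have "(\<Sum>g\<in>PiE {..<k} (\<lambda>_. UNIV). (\<Sum>i\<in>UNIV. b i * (\<Prod>m<k. x i $ (g m)))\<^sup>2) = 0"
        using T0[of k] by (simp only: T_def Tk_eq)
      then have "\<forall>g\<in>PiE {..<k} (\<lambda>_. UNIV). (\<Sum>i\<in>UNIV. b i * (\<Prod>m<k. x i $ (g m)))\<^sup>2 = 0"
        using sum_nonneg_eq_0_iff[of "PiE {..<k} (\<lambda>_. UNIV)" "\<lambda>g. (\<Sum>i\<in>UNIV. b i * (\<Prod>m<k. x i $ (g m)))\<^sup>2"]
        by (simp add: finite_PiE)
      then show ?thesis using that by auto
    qed
    obtain y where y: "inj (\<lambda>i. x i \<bullet> y)" using sep_vector[OF inj] by blast
    have bz: "(\<Sum>i\<in>UNIV. b i * (x i \<bullet> y) ^ k) = 0" for k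
    proof -
      have "(\<Sum>i\<in>UNIV. b i * (x i \<bullet> y) ^ k) =
          (\<Sum>i\<in>UNIV. \<Sum>g\<in>PiE {..<k} (\<lambda>_. UNIV). (\<Prod>m<k. y $ (g m)) * (b i * (\<Prod>m<k. x i $ (g m))))"
        unfolding power_inner_expand sum_distrib_left prod.distrib by (simp add: mult_ac)
      also have "\<dots> = (\<Sum>g\<in>PiE {..<k} (\<lambda>_. UNIV). \<Sum>i\<in>UNIV. (\<Prod>m<k. y $ (g m)) * (b i * (\<Prod>m<k. x i $ (g m))))"
        by (rule sum.swap)
      also have "\<dots> = (\<Sum>g\<in>PiE {..<k} (\<lambda>_. UNIV). (\<Prod>m<k. y $ (g m)) * (\<Sum>i\<in>UNIV. b i * (\<Prod>m<k. x i $ (g m))))"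
        by (simp only: sum_distrib_left)
      also have "\<dots> = 0" using V0 by simp
      finally show ?thesis .
    qed
    have "b i1 = 0" by (rule vandermonde_zero[OF y]) (rule bz)
    then show False using a by (simp add: b_def)
  qed
  then obtain k where k: "T k > 0" by blast
  have "0 < (2*c)^k / fact k * T k" using k c by simp
  then have "0 < suminf (\<lambda>k. (2*c)^k / fact k * T k)"
  proof (subst suminf_pos_iff)
    show "summable (\<lambda>k. (2*c)^k / fact k * T k)" using sm by (rule sums_summable)
    show "0 \<le> (2*c)^n / fact n * T n" for n using Tnn[of n] c by simp
  qed (use \<open>0 < (2*c)^k / fact k * T k\<close> in blast)
  then show ?thesis using sums_unique[OF sm] by simp
qed


lemma gamma_scaled:
  fixes nu rho :: real
  assumes nu: "nu > 0" and rho: "rho > 0"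
  shows "(\<lambda>t. t powr (nu - 1) * exp (- t / rho\<^sup>2)) absolutely_integrable_on {0<..}
     \<and> integral {0<..} (\<lambda>t. t powr (nu - 1) * exp (- t / rho\<^sup>2)) = rho powr (2 * nu) * Gamma nu"
proof -
  have G0: "((\<lambda>t. t powr (nu - 1) / exp t) has_integral Gamma nu) {0..}"
    using Gamma_integral_real nu by blast
  have G1: "((\<lambda>t. t powr (nu - 1) / exp t) has_integral Gamma nu) {0<..}"
  proof -
    have n1: "negligible {x \<in> {0..} - {0<..}. x powr (nu - 1) / exp x \<noteq> (0::real)}"
      by (rule negligible_subset[of "{0}"]) auto
    have n2: "negligible {x \<in> {0<..} - {0..}. x powr (nu - 1) / exp x \<noteq> (0::real)}"
      by (rule negligible_subset[of "{}"]) auto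
    show ?thesis using has_integral_spike_set_eq[OF n1 n2] G0 by blast
  qed
  have A1: "(\<lambda>t. t powr (nu - 1) / exp t) absolutely_integrable_on {0<..}"
    using G1 by (intro nonnegative_absolutely_integrable_1) (auto simp: has_integral_integrable)
  define c where "c = rho powr (2 * nu)"
  have c: "c > 0" using rho by (simp add: c_def)
  have A2: "(\<lambda>s. c * (s powr (nu - 1) / exp s)) absolutely_integrable_on {0<..}"
  proof -
    have "(\<lambda>s. c *\<^sub>R (s powr (nu - 1) / exp s)) absolutely_integrable_on {0<..}"
      using A1 by (simp only: absolutely_integrable_on_scaleR_iff) simp
    then show ?thesis by simp
  qed
  have I2: "integral {0<..} (\<lambda>s. c * (s powr (nu - 1) / exp s)) = c * Gamma nu"
    by (simp only: integral_mult_right integral_unique[OF G1])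
  have eq: "\<bar>rho\<^sup>2\<bar> * ((rho\<^sup>2 * s) powr (nu - 1) * exp (- (rho\<^sup>2 * s) / rho\<^sup>2)) = c * (s powr (nu - 1) / exp s)"
    if "s \<in> {0<..}" for s
  proof -
    have "(rho\<^sup>2 * s) powr (nu - 1) = (rho\<^sup>2) powr (nu - 1) * s powr (nu - 1)"
      using that rho by (simp add: powr_mult)
    moreover have "rho\<^sup>2 * (rho\<^sup>2) powr (nu - 1) = c"
    proof -
      have "rho\<^sup>2 * (rho\<^sup>2) powr (nu - 1) = (rho\<^sup>2) powr nu"
        using rho by (simp add: powr_diff)
      also have "\<dots> = (rho powr 2) powr nu"
        using rho by (simp add: powr_numeral)
      also have "\<dots> = rho powr (2 * nu)"
        by (simp add: powr_powr)
      finally show ?thesis by (simp add: c_def)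
    qed
    moreover have "exp (- (rho\<^sup>2 * s) / rho\<^sup>2) = exp (- s)" using rho by simp
    ultimately show ?thesis
      by (simp add: exp_minus divide_inverse mult_ac flip: \<open>rho\<^sup>2 * (rho\<^sup>2) powr (nu - 1) = c\<close>)
  qed
  have img: "(\<lambda>s. rho\<^sup>2 * s) ` {0<..} = {0<..}"
  proof
    show "(\<lambda>s. rho\<^sup>2 * s) ` {0<..} \<subseteq> {0<..}" using rho by auto
    show "{0<..} \<subseteq> (\<lambda>s. rho\<^sup>2 * s) ` {0<..}"
    proof
      fix t :: real assume "t \<in> {0<..}"
      then have "t = rho\<^sup>2 * (t / rho\<^sup>2)" "t / rho\<^sup>2 \<in> {0<..}" using rho by auto
      then show "t \<in> (\<lambda>s. rho\<^sup>2 * s) ` {0<..}" by blast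
    qed
  qed
  have "(\<lambda>t. t powr (nu - 1) * exp (- t / rho\<^sup>2)) absolutely_integrable_on ((\<lambda>s. rho\<^sup>2 * s) ` {0<..})
     \<and> integral ((\<lambda>s. rho\<^sup>2 * s) ` {0<..}) (\<lambda>t. t powr (nu - 1) * exp (- t / rho\<^sup>2)) = c * Gamma nu"
  proof (rule has_absolute_integral_change_of_variables_1'[THEN iffD1])
    show "({0<..}::real set) \<in> sets lebesgue" by simp
    show "((\<lambda>s. rho\<^sup>2 * s) has_field_derivative rho\<^sup>2) (at x within {0<..})" for x :: real
      by (auto intro!: derivative_eq_intros)
    show "inj_on (\<lambda>s. rho\<^sup>2 * s) {0<..}" using rho by (auto simp: inj_on_def)
    show "(\<lambda>x. \<bar>rho\<^sup>2\<bar> * ((rho\<^sup>2 * x) powr (nu - 1) * exp (- (rho\<^sup>2 * x) / rho\<^sup>2))) absolutely_integrable_on {0<..} \<and>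
      integral {0<..} (\<lambda>x. \<bar>rho\<^sup>2\<bar> * ((rho\<^sup>2 * x) powr (nu - 1) * exp (- (rho\<^sup>2 * x) / rho\<^sup>2))) = c * Gamma nu"
    proof
      show "(\<lambda>x. \<bar>rho\<^sup>2\<bar> * ((rho\<^sup>2 * x) powr (nu - 1) * exp (- (rho\<^sup>2 * x) / rho\<^sup>2))) absolutely_integrable_on {0<..}"
        by (rule absolutely_integrable_spike[OF A2 negligible_empty]) (use eq in auto)
      have "integral {0<..} (\<lambda>x. \<bar>rho\<^sup>2\<bar> * ((rho\<^sup>2 * x) powr (nu - 1) * exp (- (rho\<^sup>2 * x) / rho\<^sup>2)))
          = integral {0<..} (\<lambda>s. c * (s powr (nu - 1) / exp s))"
        by (rule integral_cong) (use eq in auto)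
      then show "integral {0<..} (\<lambda>x. \<bar>rho\<^sup>2\<bar> * ((rho\<^sup>2 * x) powr (nu - 1) * exp (- (rho\<^sup>2 * x) / rho\<^sup>2))) = c * Gamma nu"
        using I2 by simp
    qed
  qed
  then show ?thesis using img by (simp add: c_def)
qed

lemma bessel_repr:
  fixes nu rho r :: real
  assumes nu: "nu > 0" and rho: "rho > 0" and r: "r > 0"
  shows "(\<lambda>t. t powr (nu - 1) * exp (- t / rho\<^sup>2) * exp (- r\<^sup>2 / (4 * t))) absolutely_integrable_on {0<..}
     \<and> integral {0<..} (\<lambda>t. t powr (nu - 1) * exp (- t / rho\<^sup>2) * exp (- r\<^sup>2 / (4 * t)))
        = 2 * (r * rho / 2) powr nu * besselK nu (r / rho)"
proof -
  define F where "F = (\<lambda>t::real. t powr (nu - 1) * exp (- t / rho\<^sup>2) * exp (- r\<^sup>2 / (4 * t)))"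
  define W where "W = (\<lambda>t::real. t powr (nu - 1) * exp (- t / rho\<^sup>2))"
  have WA: "W absolutely_integrable_on {0<..}" using gamma_scaled[OF nu rho] by (simp add: W_def)
  have AF: "F absolutely_integrable_on {0<..}"
  proof (rule measurable_bounded_by_integrable_imp_absolutely_integrable)
    show "({0<..}::real set) \<in> sets lebesgue" by simp
    have "continuous_on {0<..} F" unfolding F_def
      using rho by (auto intro!: continuous_intros)
    then show "F \<in> borel_measurable (lebesgue_on {0<..})"
      by (rule continuous_imp_measurable_on_sets_lebesgue) simp
    show "W integrable_on {0<..}" using WA absolutely_integrable_on_def by blast
    fix t :: real assume t: "t \<in> {0<..}"
    have "exp (- r\<^sup>2 / (4 * t)) \<le> 1" using t by simp
    then show "norm (F t) \<le> W t" unfolding F_def W_def using t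
      by (simp add: abs_mult mult_left_le)
  qed
  define c where "c = r * rho / 2"
  define x where "x = r / rho"
  have c: "c > 0" and x: "x > 0" using r rho by (auto simp: c_def x_def)
  define f where "f = (\<lambda>u::real. exp (nu * u) * exp (- x * cosh u))"
  have eqF: "\<bar>1 / t\<bar> * f (ln (t / c)) = c powr (- nu) * F t" if t: "t \<in> {0<..}" for t
  proof -
    have t0: "t > 0" using t by simp
    have e1: "exp (nu * ln (t / c)) = (t / c) powr nu"
      using t0 c by (simp add: powr_def)
    have e2: "cosh (ln (t / c)) = (t / c + c / t) / 2"
      using t0 c by (simp add: cosh_def exp_minus)
    have e3: "x * ((t / c + c / t) / 2) = t / rho\<^sup>2 + r\<^sup>2 / (4 * t)"
      using t0 r rho by (simp add: x_def c_def field_simps power2_eq_square)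
    have e4: "(t / c) powr nu / t = c powr (- nu) * t powr (nu - 1)"
      using t0 c by (simp add: powr_divide powr_diff powr_minus divide_simps)
    have "\<bar>1 / t\<bar> * f (ln (t / c)) = (t / c) powr nu / t * exp (- (t / rho\<^sup>2 + r\<^sup>2 / (4 * t)))"
      unfolding f_def e1 e2 using t0 by (simp add: e3[symmetric])
    also have "\<dots> = c powr (- nu) * F t"
      unfolding e4 F_def by (simp add: exp_add[symmetric] mult_ac)
    finally show ?thesis .
  qed
  have img: "(\<lambda>t. ln (t / c)) ` {0<..} = UNIV"
  proof -
    have "u \<in> (\<lambda>t. ln (t / c)) ` {0<..}" for u
    proof
      show "u = ln (c * exp u / c)" using c by simp
      show "c * exp u \<in> {0<..}" using c by simp
    qed
    then show ?thesis by blast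
  qed
  have cov: "f absolutely_integrable_on ((\<lambda>t. ln (t / c)) ` {0<..})
     \<and> integral ((\<lambda>t. ln (t / c)) ` {0<..}) f = c powr (- nu) * integral {0<..} F"
  proof (rule has_absolute_integral_change_of_variables_1'[THEN iffD1])
    show "({0<..}::real set) \<in> sets lebesgue" by simp
    show "((\<lambda>t. ln (t / c)) has_field_derivative 1 / t) (at t within {0<..})" if "t \<in> {0<..}" for t
      using that c by (auto intro!: derivative_eq_intros simp: field_simps)
    show "inj_on (\<lambda>t. ln (t / c)) {0<..}" using c by (auto simp: inj_on_def)
    have A: "(\<lambda>t. c powr (- nu) * F t) absolutely_integrable_on {0<..}"
    proof -
      have "(\<lambda>t. c powr (- nu) *\<^sub>R F t) absolutely_integrable_on {0<..}"
        using AF by (simp only: absolutely_integrable_on_scaleR_iff) simp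
      then show ?thesis by simp
    qed
    show "(\<lambda>t. \<bar>1 / t\<bar> * f (ln (t / c))) absolutely_integrable_on {0<..} \<and>
      integral {0<..} (\<lambda>t. \<bar>1 / t\<bar> * f (ln (t / c))) = c powr (- nu) * integral {0<..} F"
    proof
      show "(\<lambda>t. \<bar>1 / t\<bar> * f (ln (t / c))) absolutely_integrable_on {0<..}"
        by (rule absolutely_integrable_spike[OF A negligible_empty]) (use eqF in auto)
      have "integral {0<..} (\<lambda>t. \<bar>1 / t\<bar> * f (ln (t / c))) = integral {0<..} (\<lambda>t. c powr (- nu) * F t)"
        by (rule integral_cong) (use eqF in auto)
      then show "integral {0<..} (\<lambda>t. \<bar>1 / t\<bar> * f (ln (t / c))) = c powr (- nu) * integral {0<..} F"
        by (simp only: integral_mult_right)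
    qed
  qed
  then have fU: "f absolutely_integrable_on UNIV" and IU: "integral UNIV f = c powr (- nu) * integral {0<..} F"
    unfolding img by auto
  have fp: "f absolutely_integrable_on {0..}"
    by (rule set_integrable_subset[OF fU]) auto
  have fm: "f absolutely_integrable_on {..0}"
    by (rule set_integrable_subset[OF fU]) auto
  have ip: "f integrable_on {0..}" and im: "f integrable_on {..0}"
    using fp fm absolutely_integrable_on_def by blast+
  have split: "integral UNIV f = integral {..0} f + integral {0..} f"
  proof -
    have "negligible ({..0} \<inter> ({0..}::real set))"
      by (rule negligible_subset[of "{0}"]) auto
    then have "integral ({..0} \<union> {0..}) f = integral {..0} f + integral {0..} f"
      using integral_Un[OF im ip] by blast
    moreover have "{..0} \<union> ({0..}::real set) = UNIV" by auto
    ultimately show ?thesis by simp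
  qed
  have refl: "(\<lambda>u. \<bar>-1\<bar> * f (- u)) absolutely_integrable_on {0..} \<and>
     integral {0..} (\<lambda>u. \<bar>-1\<bar> * f (- u)) = integral {..0} f"
  proof (rule has_absolute_integral_change_of_variables_1'[of "{0..}" uminus "\<lambda>_. -1" f "integral {..0} f", THEN iffD2])
    show "({0..}::real set) \<in> sets lebesgue" by simp
    show "(uminus has_field_derivative -1) (at t within {0..})" for t :: real
      by (auto intro!: derivative_eq_intros)
    show "inj_on uminus ({0..}::real set)" by (auto simp: inj_on_def)
    show "f absolutely_integrable_on uminus ` {0..} \<and> integral (uminus ` {0..}) f = integral {..0} f"
      using fm by simp
  qed
  then have im2: "(\<lambda>u. f (- u)) integrable_on {0..}" and I2: "integral {0..} (\<lambda>u. f (- u)) = integral {..0} f"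
    using absolutely_integrable_on_def by auto
  have sym: "f u + f (- u) = 2 * (exp (- x * cosh u) * cosh (nu * u))" for u
    by (simp add: f_def cosh_def field_simps)
  have "integral UNIV f = integral {0..} (\<lambda>u. f u + f (- u))"
    using split I2 integral_add[OF ip im2] by simp
  also have "\<dots> = 2 * besselK nu x"
    unfolding sym besselK_def by (simp only: integral_mult_right)
  finally have "integral UNIV f = 2 * besselK nu x" .
  then have "c powr (- nu) * integral {0<..} F = 2 * besselK nu x" using IU by simp
  then have "integral {0<..} F = c powr nu * (2 * besselK nu x)"
    using c by (simp add: powr_minus field_simps)
  then show ?thesis using AF by (simp add: F_def c_def x_def mult_ac)
qed


lemma matern_repr:
  fixes h :: "'a::real_normed_vector" and nu rho :: real
  assumes nu: "nu > 0" and rho: "rho > 0"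
  shows "(\<lambda>t. t powr (nu - 1) * exp (- t / rho\<^sup>2) * exp (- (norm h)\<^sup>2 / (4 * t))) integrable_on {0<..}
    \<and> rho powr (2 * nu) * matern h rho nu
      = integral {0<..} (\<lambda>t. t powr (nu - 1) * exp (- t / rho\<^sup>2) * exp (- (norm h)\<^sup>2 / (4 * t))) / Gamma nu"
proof (cases "h = 0")
  case True
  have G: "Gamma nu > 0" using nu by (simp add: Gamma_real_pos)
  from gamma_scaled[OF nu rho] show ?thesis using True G
    by (simp add: matern_def absolutely_integrable_on_def)
next
  case False
  define r where "r = norm h"
  have r: "r > 0" using False by (simp add: r_def)
  have G: "Gamma nu > 0" using nu by (simp add: Gamma_real_pos)
  from bessel_repr[OF nu rho r] have
    A: "(\<lambda>t. t powr (nu - 1) * exp (- t / rho\<^sup>2) * exp (- r\<^sup>2 / (4 * t))) absolutely_integrable_on {0<..}"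
    and I: "integral {0<..} (\<lambda>t. t powr (nu - 1) * exp (- t / rho\<^sup>2) * exp (- r\<^sup>2 / (4 * t)))
        = 2 * (r * rho / 2) powr nu * besselK nu (r / rho)" by auto
  have key: "rho powr (2 * nu) * ((r / rho) powr nu / (Gamma nu * 2 powr (nu - 1)))
      = 2 * (r * rho / 2) powr nu / Gamma nu"
  proof -
    define R where "R = r powr nu"
    define P where "P = rho powr nu"
    define D where "D = (2::real) powr (nu - 1)"
    have P: "P > 0" and D: "D > 0" and R: "R > 0" using rho r by (auto simp: P_def D_def R_def)
    have e1: "rho powr (2 * nu) * (r / rho) powr nu = R * P"
    proof -
      have "rho powr (2 * nu) = P * P" by (simp add: P_def powr_add[symmetric])
      moreover have "(r / rho) powr nu = R / P" using r rho by (simp add: powr_divide R_def P_def)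
      ultimately show ?thesis using P by simp
    qed
    have e2: "2 * (r * rho / 2) powr nu = R * P / D"
    proof -
      have "(r * rho / 2) powr nu = R * P / 2 powr nu"
        using r rho by (simp add: powr_divide powr_mult R_def P_def)
      moreover have "(2::real) powr nu = 2 * D" by (simp add: D_def powr_diff)
      ultimately show ?thesis using D by simp
    qed
    have "rho powr (2 * nu) * ((r / rho) powr nu / (Gamma nu * 2 powr (nu - 1)))
        = (rho powr (2 * nu) * (r / rho) powr nu) / (Gamma nu * D)" by (simp add: D_def)
    also have "\<dots> = (R * P / D) / Gamma nu" unfolding e1 using D G by simp
    also have "\<dots> = 2 * (r * rho / 2) powr nu / Gamma nu" unfolding e2 ..
    finally show ?thesis .
  qed
  show ?thesis
  proof
    show "(\<lambda>t. t powr (nu - 1) * exp (- t / rho\<^sup>2) * exp (- (norm h)\<^sup>2 / (4 * t))) integrable_on {0<..}"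
      using A absolutely_integrable_on_def r_def by blast
    have "rho powr (2 * nu) * matern h rho nu
       = rho powr (2 * nu) * ((r / rho) powr nu / (Gamma nu * 2 powr (nu - 1))) * besselK nu (r / rho)"
      using False by (simp add: matern_def r_def)
    also have "\<dots> = integral {0<..} (\<lambda>t. t powr (nu - 1) * exp (- t / rho\<^sup>2) * exp (- r\<^sup>2 / (4 * t))) / Gamma nu"
      unfolding key I by simp
    finally show "rho powr (2 * nu) * matern h rho nu
      = integral {0<..} (\<lambda>t. t powr (nu - 1) * exp (- t / rho\<^sup>2) * exp (- (norm h)\<^sup>2 / (4 * t))) / Gamma nu"
      by (simp add: r_def)
  qed
qed

lemma qform_eq:
  fixes s :: "'n::finite \<Rightarrow> 'a::real_normed_vector" and a :: "real^'n"
  shows "a \<bullet> (matern_corr_matrix s rho nu *v a) = (\<Sum>i\<in>UNIV. \<Sum>j\<in>UNIV. a$i * a$j * matern (s i - s j) rho nu)"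
  by (simp add: inner_vec_def matrix_vector_mult_def matern_corr_matrix_def sum_distrib_left mult_ac)

lemma Q_repr:
  fixes s :: "'n::finite \<Rightarrow> 'a::real_normed_vector" and a :: "real^'n" and nu rho :: real
  assumes nu: "nu > 0" and rho: "rho > 0"
  shows "(\<lambda>t. t powr (nu - 1) * exp (- t / rho\<^sup>2) *
       (\<Sum>i\<in>UNIV. \<Sum>j\<in>UNIV. a$i * a$j * exp (- (1 / (4 * t)) * (norm (s i - s j))\<^sup>2))) integrable_on {0<..}
    \<and> rho powr (2 * nu) * (a \<bullet> (matern_corr_matrix s rho nu *v a))
      = integral {0<..} (\<lambda>t. t powr (nu - 1) * exp (- t / rho\<^sup>2) *
       (\<Sum>i\<in>UNIV. \<Sum>j\<in>UNIV. a$i * a$j * exp (- (1 / (4 * t)) * (norm (s i - s j))\<^sup>2))) / Gamma nu"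
proof -
  define G where "G i j = (\<lambda>t. t powr (nu - 1) * exp (- t / rho\<^sup>2) * exp (- (norm (s i - s j))\<^sup>2 / (4 * t)))" for i j
  have Gi: "G i j integrable_on {0<..}" for i j using matern_repr[OF nu rho, of "s i - s j"] by (simp add: G_def)
  have Gr: "rho powr (2 * nu) * matern (s i - s j) rho nu = integral {0<..} (G i j) / Gamma nu" for i j
    using matern_repr[OF nu rho, of "s i - s j"] by (simp add: G_def)
  have fun_eq: "(\<lambda>t. t powr (nu - 1) * exp (- t / rho\<^sup>2) *
       (\<Sum>i\<in>UNIV. \<Sum>j\<in>UNIV. a$i * a$j * exp (- (1 / (4 * t)) * (norm (s i - s j))\<^sup>2)))
     = (\<lambda>t. \<Sum>i\<in>UNIV. \<Sum>j\<in>UNIV. a$i * a$j * G i j t)"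
    by (rule ext) (simp add: G_def sum_distrib_left mult_ac)
  have Ci: "(\<lambda>t. a$i * a$j * G i j t) integrable_on {0<..}" for i j
    using integrable_on_cmult_left[OF Gi, of "a$i * a$j" i j] by simp
  have int1: "(\<lambda>t. \<Sum>i\<in>UNIV. \<Sum>j\<in>UNIV. a$i * a$j * G i j t) integrable_on {0<..}"
    by (intro integrable_sum Ci) auto
  have "integral {0<..} (\<lambda>t. \<Sum>i\<in>UNIV. \<Sum>j\<in>UNIV. a$i * a$j * G i j t)
      = (\<Sum>i\<in>UNIV. \<Sum>j\<in>UNIV. a$i * a$j * integral {0<..} (G i j))"
  proof -
    have "integral {0<..} (\<lambda>t. \<Sum>i\<in>UNIV. \<Sum>j\<in>UNIV. a$i * a$j * G i j t)
       = (\<Sum>i\<in>UNIV. integral {0<..} (\<lambda>t. \<Sum>j\<in>UNIV. a$i * a$j * G i j t))"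
      by (rule integral_sum) (auto intro!: integrable_sum Ci)
    also have "\<dots> = (\<Sum>i\<in>UNIV. \<Sum>j\<in>UNIV. integral {0<..} (\<lambda>t. a$i * a$j * G i j t))"
      by (rule sum.cong[OF refl], rule integral_sum) (auto intro!: Ci)
    also have "\<dots> = (\<Sum>i\<in>UNIV. \<Sum>j\<in>UNIV. a$i * a$j * integral {0<..} (G i j))"
      by (simp only: integral_mult_right)
    finally show ?thesis .
  qed
  moreover have "rho powr (2 * nu) * (a \<bullet> (matern_corr_matrix s rho nu *v a))
      = (\<Sum>i\<in>UNIV. \<Sum>j\<in>UNIV. a$i * a$j * integral {0<..} (G i j)) / Gamma nu"
  proof -
    have "rho powr (2 * nu) * (\<Sum>i\<in>UNIV. \<Sum>j\<in>UNIV. a$i * a$j * matern (s i - s j) rho nu)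
        = (\<Sum>i\<in>UNIV. \<Sum>j\<in>UNIV. a$i * a$j * (rho powr (2 * nu) * matern (s i - s j) rho nu))"
      by (simp only: sum_distrib_left) (simp only: mult_ac)
    also have "\<dots> = (\<Sum>i\<in>UNIV. \<Sum>j\<in>UNIV. a$i * a$j * (integral {0<..} (G i j) / Gamma nu))"
      by (simp only: Gr)
    also have "\<dots> = (\<Sum>i\<in>UNIV. \<Sum>j\<in>UNIV. a$i * a$j * integral {0<..} (G i j)) / Gamma nu"
      by (simp add: sum_divide_distrib)
    finally show ?thesis unfolding qform_eq .
  qed
  ultimately show ?thesis using int1 unfolding fun_eq by simp
qed


lemma P_nonneg:
  fixes s :: "'n::finite \<Rightarrow> real^'d" and a :: "real^'n" and t :: real
  assumes inj: "inj s" and t: "t > 0"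
  shows "0 \<le> (\<Sum>i\<in>UNIV. \<Sum>j\<in>UNIV. a$i * a$j * exp (- (1 / (4 * t)) * (norm (s i - s j))\<^sup>2))"
proof (cases "\<exists>i. a$i \<noteq> 0")
  case True
  then obtain i1 where "a$i1 \<noteq> 0" by blast
  from gauss_pd[of "1 / (4 * t)" s "\<lambda>i. a$i" i1] this t inj show ?thesis by simp
next
  case False
  then show ?thesis by simp
qed

lemma P_pos:
  fixes s :: "'n::finite \<Rightarrow> real^'d" and a :: "real^'n" and t :: real
  assumes inj: "inj s" and t: "t > 0" and a: "a \<noteq> 0"
  shows "0 < (\<Sum>i\<in>UNIV. \<Sum>j\<in>UNIV. a$i * a$j * exp (- (1 / (4 * t)) * (norm (s i - s j))\<^sup>2))"
proof -
  from a obtain i1 where "a$i1 \<noteq> 0" by (auto simp: vec_eq_iff)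
  from gauss_pd[of "1 / (4 * t)" s "\<lambda>i. a$i" i1] this t inj show ?thesis by simp
qed

lemma Q_mono:
  fixes s :: "'n::finite \<Rightarrow> real^'d" and a :: "real^'n" and nu rho1 rho2 :: real
  assumes inj: "inj s" and nu: "nu > 0" and r1: "0 < rho1" and r12: "rho1 < rho2"
  shows "rho1 powr (2 * nu) * (a \<bullet> (matern_corr_matrix s rho1 nu *v a))
       \<le> rho2 powr (2 * nu) * (a \<bullet> (matern_corr_matrix s rho2 nu *v a))"
proof -
  have r2: "rho2 > 0" using r1 r12 by simp
  define P where "P t = (\<Sum>i\<in>UNIV. \<Sum>j\<in>UNIV. a$i * a$j * exp (- (1 / (4 * t)) * (norm (s i - s j))\<^sup>2))" for t
  note Q1 = Q_repr[OF nu r1, of a s, folded P_def]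
  note Q2 = Q_repr[OF nu r2, of a s, folded P_def]
  have G: "Gamma nu > 0" using nu by (simp add: Gamma_real_pos)
  have "integral {0<..} (\<lambda>t. t powr (nu - 1) * exp (- t / rho1\<^sup>2) * P t)
      \<le> integral {0<..} (\<lambda>t. t powr (nu - 1) * exp (- t / rho2\<^sup>2) * P t)"
  proof (rule integral_le)
    show "(\<lambda>t. t powr (nu - 1) * exp (- t / rho1\<^sup>2) * P t) integrable_on {0<..}" using Q1 by blast
    show "(\<lambda>t. t powr (nu - 1) * exp (- t / rho2\<^sup>2) * P t) integrable_on {0<..}" using Q2 by blast
    fix t :: real assume t: "t \<in> {0<..}"
    have "t / rho2\<^sup>2 \<le> t / rho1\<^sup>2"
      using t r1 r12 by (intro divide_left_mono) (auto intro: power_strict_mono less_imp_le)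
    then have "exp (- t / rho1\<^sup>2) \<le> exp (- t / rho2\<^sup>2)" by simp
    moreover have "0 \<le> P t" unfolding P_def using P_nonneg[OF inj] t by simp
    moreover have "0 \<le> t powr (nu - 1)" by simp
    ultimately show "t powr (nu - 1) * exp (- t / rho1\<^sup>2) * P t \<le> t powr (nu - 1) * exp (- t / rho2\<^sup>2) * P t"
      by (intro mult_right_mono mult_left_mono) auto
  qed
  then show ?thesis using Q1 Q2 G by (simp add: divide_right_mono)
qed

lemma Q_pos:
  fixes s :: "'n::finite \<Rightarrow> real^'d" and a :: "real^'n" and nu rho :: real
  assumes inj: "inj s" and nu: "nu > 0" and rho: "0 < rho" and a: "a \<noteq> 0"
  shows "0 < a \<bullet> (matern_corr_matrix s rho nu *v a)"
proof -
  define P where "P t = (\<Sum>i\<in>UNIV. \<Sum>j\<in>UNIV. a$i * a$j * exp (- (1 / (4 * t)) * (norm (s i - s j))\<^sup>2))" for t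
  note Q = Q_repr[OF nu rho, of a s, folded P_def]
  define F where "F t = t powr (nu - 1) * exp (- t / rho\<^sup>2) * P t" for t
  have G: "Gamma nu > 0" using nu by (simp add: Gamma_real_pos)
  have Fpos: "F t > 0" if "t > 0" for t
    unfolding F_def P_def using P_pos[OF inj that a] that by simp
  have cont: "continuous_on {1..2} F"
    unfolding F_def P_def using rho by (auto intro!: continuous_intros)
  obtain t0 where t0: "t0 \<in> {1..2}" and min: "\<And>t. t \<in> {1..2} \<Longrightarrow> F t0 \<le> F t"
    using continuous_attains_inf[OF compact_Icc _ cont] by auto
  have m: "F t0 > 0" using t0 Fpos by simp
  have Fi: "F integrable_on {0<..}" using Q unfolding F_def by blast
  have "F t0 \<le> integral {1..2} F"
  proof -
    have "integral {1..2::real} (\<lambda>_. F t0) \<le> integral {1..2} F"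
      by (rule integral_le) (auto intro: integrable_continuous_real cont min)
    then show ?thesis by simp
  qed
  also have "\<dots> \<le> integral {0<..} F"
    by (rule integral_subset_le) (use Fi cont integrable_continuous_real Fpos in \<open>auto intro: less_imp_le\<close>)
  finally have "0 < integral {0<..} F" using m by simp
  then have "0 < rho powr (2 * nu) * (a \<bullet> (matern_corr_matrix s rho nu *v a))"
    using Q G unfolding F_def by simp
  then show ?thesis using rho by (simp add: zero_less_mult_iff)
qed


lemma scalar_ineq:
  fixes c1 c2 qv a b :: real
  assumes c1: "c1 > 0" and c2: "c2 > 0"
    and h1: "0 \<le> qv / c2\<^sup>2 - 2 * a / (c1 * c2) + b / c1\<^sup>2"
    and h2: "c1 * qv \<le> c2 * a"
  shows "a / c2 \<le> b / c1"
proof -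
  have "0 \<le> (c1 * c2\<^sup>2) * (qv / c2\<^sup>2 - 2 * a / (c1 * c2) + b / c1\<^sup>2)"
    using h1 c1 c2 by simp
  also have "\<dots> = c1 * qv - 2 * a * c2 + b * c2\<^sup>2 / c1"
    using c1 c2 by (simp add: field_simps power2_eq_square)
  finally have "0 \<le> c1 * qv - 2 * a * c2 + b * c2\<^sup>2 / c1" .
  moreover from h2 have "c1 * qv \<le> a * c2" by (simp add: mult.commute)
  ultimately have "a * c2 \<le> b * c2\<^sup>2 / c1" by linarith
  then have "a * c2 * c1 \<le> b * c2\<^sup>2" using c1 by (simp add: field_simps)
  then have "(a * c1) * c2 \<le> (b * c2) * c2" by (simp add: power2_eq_square mult_ac)
  then have "a * c1 \<le> b * c2" using c2 by simp
  then show ?thesis using c1 c2 by (simp add: field_simps)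
qed

lemma bilin_sym:
  fixes A :: "real^'n::finite^'n"
  assumes symA: "\<And>i j. A$i$j = A$j$i"
  shows "x \<bullet> (A *v y) = y \<bullet> (A *v x)"
proof -
  have "x \<bullet> (A *v y) = (\<Sum>i\<in>UNIV. \<Sum>j\<in>UNIV. x$i * A$i$j * y$j)"
    by (simp add: inner_vec_def matrix_vector_mult_def sum_distrib_left mult_ac)
  also have "\<dots> = (\<Sum>j\<in>UNIV. \<Sum>i\<in>UNIV. x$i * A$i$j * y$j)"
    by (rule sum.swap)
  also have "\<dots> = (\<Sum>j\<in>UNIV. \<Sum>i\<in>UNIV. y$j * A$j$i * x$i)"
    by (simp add: symA mult_ac)
  also have "\<dots> = y \<bullet> (A *v x)"
    by (simp add: inner_vec_def matrix_vector_mult_def sum_distrib_left mult_ac)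
  finally show ?thesis .
qed

lemma loewner:
  fixes A B :: "real^'n::finite^'n" and Z u v :: "real^'n" and c1 c2 :: real
  assumes symA: "\<And>i j. A$i$j = A$j$i"
    and psd: "\<And>x. 0 \<le> x \<bullet> (A *v x)"
    and le: "\<And>x. c1 * (x \<bullet> (A *v x)) \<le> c2 * (x \<bullet> (B *v x))"
    and c1: "c1 > 0" and c2: "c2 > 0" and Au: "A *v u = Z" and Bv: "B *v v = Z"
  shows "(Z \<bullet> v) / c2 \<le> (Z \<bullet> u) / c1"
proof -
  define y where "y = (1 / c2) *\<^sub>R v - (1 / c1) *\<^sub>R u"
  have Ay: "A *v y = (1 / c2) *\<^sub>R (A *v v) - (1 / c1) *\<^sub>R Z"
    unfolding y_def Au[symmetric] by (simp add: matrix_vector_mult_diff_distrib matrix_vector_mult_scaleR)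
  have uv: "u \<bullet> (A *v v) = Z \<bullet> v"
    using bilin_sym[OF symA, of u v] Au by (simp add: inner_commute)
  have "y \<bullet> (A *v y) = (v \<bullet> (A *v v)) / c2\<^sup>2 - 2 * (Z \<bullet> v) / (c1 * c2) + (Z \<bullet> u) / c1\<^sup>2"
    unfolding Ay unfolding y_def
    by (simp add: inner_diff_left inner_diff_right uv inner_commute power2_eq_square field_simps)
  then have h1: "0 \<le> (v \<bullet> (A *v v)) / c2\<^sup>2 - 2 * (Z \<bullet> v) / (c1 * c2) + (Z \<bullet> u) / c1\<^sup>2"
    using psd[of y] by simp
  have h2: "c1 * (v \<bullet> (A *v v)) \<le> c2 * (Z \<bullet> v)"
    using le[of v] Bv by (simp add: inner_commute)
  show ?thesis by (rule scalar_ineq[OF c1 c2 h1 h2])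
qed


lemma matern_sym:
  fixes s :: "'n::finite \<Rightarrow> 'a::real_normed_vector"
  shows "matern_corr_matrix s rho nu $ i $ j = matern_corr_matrix s rho nu $ j $ i"
proof -
  have "s i - s j = 0 \<longleftrightarrow> s j - s i = 0" by auto
  then show ?thesis by (simp add: matern_corr_matrix_def matern_def norm_minus_commute)
qed

lemma matern_inv:
  fixes s :: "'n::finite \<Rightarrow> real^'d" and nu rho :: real
  assumes inj: "inj s" and nu: "nu > 0" and rho: "rho > 0"
  shows "matern_corr_matrix s rho nu *v (matrix_inv (matern_corr_matrix s rho nu) *v Z) = Z"
proof -
  define M where "M = matern_corr_matrix s rho nu"
  have "\<forall>x. M *v x = 0 \<longrightarrow> x = 0"
  proof (intro allI impI)
    fix x assume "M *v x = 0"
    then have "x \<bullet> (M *v x) = 0" by simp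
    then show "x = 0" using Q_pos[OF inj nu rho, of x] unfolding M_def by force
  qed
  then have "invertible M"
    using invertible_left_inverse matrix_left_invertible_ker by blast
  then have "M ** matrix_inv M = mat 1 \<and> matrix_inv M ** M = mat 1"
    unfolding invertible_def matrix_inv_def by (rule someI_ex)
  then have "M ** matrix_inv M = mat 1" by blast
  then have "M *v (matrix_inv M *v Z) = Z" by (simp add: matrix_vector_mul_assoc)
  then show ?thesis by (simp add: M_def)
qed

theorem lemma1:
  fixes s :: "'n::finite \<Rightarrow> real^'d" and nu rho1 rho2 :: real and Z :: "real^'n"
  assumes "inj s" and "nu > 0" and "0 < rho1" and "rho1 < rho2"
  shows "c_hat s nu Z rho2 \<le> c_hat s nu Z rho1"
proof -
  note inj = assms(1) and nu = assms(2) and r1 = assms(3) and r12 = assms(4)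
  have r2: "rho2 > 0" using r1 r12 by simp
  define M1 where "M1 = matern_corr_matrix s rho1 nu"
  define M2 where "M2 = matern_corr_matrix s rho2 nu"
  define c1 where "c1 = rho1 powr (2 * nu)"
  define c2 where "c2 = rho2 powr (2 * nu)"
  have c1: "c1 > 0" and c2: "c2 > 0" using r1 r2 by (auto simp: c1_def c2_def)
  have "(Z \<bullet> (matrix_inv M2 *v Z)) / c2 \<le> (Z \<bullet> (matrix_inv M1 *v Z)) / c1"
  proof (rule loewner[where A=M1 and B=M2])
    show "M1 $ i $ j = M1 $ j $ i" for i j unfolding M1_def by (rule matern_sym)
    show "0 \<le> x \<bullet> (M1 *v x)" for x
    proof (cases "x = 0")
      case True then show ?thesis by simp
    next
      case False then show ?thesis using Q_pos[OF inj nu r1 False] unfolding M1_def by simp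
    qed
    show "c1 * (x \<bullet> (M1 *v x)) \<le> c2 * (x \<bullet> (M2 *v x))" for x
      unfolding c1_def c2_def M1_def M2_def by (rule Q_mono[OF inj nu r1 r12])
    show "c1 > 0" "c2 > 0" by (fact c1, fact c2)
    show "M1 *v (matrix_inv M1 *v Z) = Z" unfolding M1_def by (rule matern_inv[OF inj nu r1])
    show "M2 *v (matrix_inv M2 *v Z) = Z" unfolding M2_def by (rule matern_inv[OF inj nu r2])
  qed
  then have "(Z \<bullet> (matrix_inv M2 *v Z)) / c2 / real CARD('n) \<le> (Z \<bullet> (matrix_inv M1 *v Z)) / c1 / real CARD('n)"
    by (rule divide_right_mono) simp
  then show ?thesis
    unfolding c_hat_def M1_def M2_def c1_def c2_def by (simp add: divide_divide_eq_left mult.commute)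
qed

end
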